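(* Let $Y$ be a finite set. The map sending a diversity $\delta$ on $Y$ to the distance $d_\delta$ on $\mathcal{P}_{\neq\emptyset}(Y)$ is injective.
   Context: $\mathcal{P}_{\neq\emptyset}(Y)$ is the set of non-empty subsets of $Y$. A diversity on $Y$ is $\delta:\mathcal{P}(Y)\to\mathbb{R}$ with (D1) $\delta(A\cup B)+\delta(B\cup C)\ge\delta(A\cup C)$ for all $A,C\subseteq Y$ and non-empty $B\subseteq Y$, and (D2) $\delta(A)=0$ whenever $|A|\le1$. For $A,B\in\mathcal{P}_{\neq\emptyset}(Y)$: $d_\delta(A,B)=\max(0,\delta(A\cup B)-\delta(A)-\delta(B))$ if $A\ne B$ and $d_\delta(A,A)=0$. *)

theory Defs
  imports Main "HOL.Real"
begin

text \<open>A diversity on Y: a real-valued function on the subsets of Y satisfying (D1) and (D2).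
  Values on sets not contained in Y are irrelevant.\<close>
definition diversity :: "'a set \<Rightarrow> ('a set \<Rightarrow> real) \<Rightarrow> bool" where
  "diversity Y \<delta> \<longleftrightarrow>
     (\<forall>A B C. A \<subseteq> Y \<and> B \<subseteq> Y \<and> C \<subseteq> Y \<and> B \<noteq> {} \<longrightarrow>
        \<delta> (A \<union> B) + \<delta> (B \<union> C) \<ge> \<delta> (A \<union> C)) \<and>
     (\<forall>A. A \<subseteq> Y \<and> card A \<le> 1 \<longrightarrow> \<delta> A = 0)"

definition div_dist :: "('a set \<Rightarrow> real) \<Rightarrow> 'a set \<Rightarrow> 'a set \<Rightarrow> real" where
  "div_dist \<delta> A B = (if A = B then 0 else max 0 (\<delta> (A \<union> B) - \<delta> A - \<delta> B))"

end

theory Submission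
  imports Defs
begin

lemma div_D1:
  assumes "diversity Y \<delta>" "A \<subseteq> Y" "B \<subseteq> Y" "C \<subseteq> Y" "B \<noteq> {}"
  shows "\<delta> (A \<union> B) + \<delta> (B \<union> C) \<ge> \<delta> (A \<union> C)"
  using assms unfolding diversity_def by blast

lemma div_D2:
  assumes "diversity Y \<delta>" "A \<subseteq> Y" "card A \<le> 1"
  shows "\<delta> A = 0"
  using assms unfolding diversity_def by blast

lemma div_step:
  assumes d: "diversity Y \<delta>" and FY: "insert x F \<subseteq> Y" and xF: "x \<notin> F" and Fne: "F \<noteq> {}"
  shows "\<delta> (insert x F) = \<delta> F + div_dist \<delta> {x} F"
proof -
  have xY: "{x} \<subseteq> Y" and F: "F \<subseteq> Y" using FY by auto
  have z: "\<delta> {x} = 0" using div_D2[OF d xY] by simp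
  have "\<delta> (F \<union> {x}) + \<delta> ({x} \<union> {}) \<ge> \<delta> (F \<union> {})"
    using div_D1[OF d F xY, of "{}"] by simp
  hence m: "\<delta> F \<le> \<delta> (insert x F)" using z by simp
  have ne: "{x} \<noteq> F" using xF by auto
  show ?thesis using m z ne unfolding div_dist_def by auto
qed

theorem mainTheorem14:
  fixes Y :: "'a set" and \<delta>1 \<delta>2 :: "'a set \<Rightarrow> real"
  assumes "finite Y"
    and "diversity Y \<delta>1" and "diversity Y \<delta>2"
    and "\<forall>A B. A \<subseteq> Y \<and> A \<noteq> {} \<and> B \<subseteq> Y \<and> B \<noteq> {} \<longrightarrow>
               div_dist \<delta>1 A B = div_dist \<delta>2 A B"
  shows "\<forall>A. A \<subseteq> Y \<longrightarrow> \<delta>1 A = \<delta>2 A"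
proof (intro allI impI)
  fix A assume AY: "A \<subseteq> Y"
  have "finite A" using AY assms(1) finite_subset by blast
  thus "\<delta>1 A = \<delta>2 A" using AY
  proof (induction A rule: finite_induct)
    case empty
    then show ?case using div_D2[OF assms(2)] div_D2[OF assms(3)] by simp
  next
    case (insert x F)
    show ?case
    proof (cases "F = {}")
      case True
      then show ?thesis using div_D2[OF assms(2) insert.prems] div_D2[OF assms(3) insert.prems] by simp
    next
      case False
      have "\<delta>1 (insert x F) = \<delta>1 F + div_dist \<delta>1 {x} F"
        using div_step[OF assms(2) insert.prems insert.hyps(2) False] .
      moreover have "\<delta>2 (insert x F) = \<delta>2 F + div_dist \<delta>2 {x} F"
        using div_step[OF assms(3) insert.prems insert.hyps(2) False] .
      moreover have "div_dist \<delta>1 {x} F = div_dist \<delta>2 {x} F"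
        using assms(4) insert.prems False by simp
      ultimately show ?thesis using insert.IH insert.prems by simp
    qed
  qed
qed

end
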